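(* Let $R$ be an associative ring with identity and involution $*$, and let $a\in R^{\#}\cap R^{\dagger}$. Write $x=a(a^{\#})^*a^{\dagger}$ and $b=a^{\dagger}a^2$. Then the following are equivalent: (1) $a\in R^{SEP}$; (2) $x-b$ is a right $(-b)$-idempotent; (3) $x-b$ is a left $(-b)$-idempotent; (4) $b-x$ is a right $(-x)$-idempotent; (5) $b-x$ is a left $(-x)$-idempotent.
   Context: An involution on $R$ is a map $x\mapsto x^*$ with $(x^* )^*=x$, $(x+y)^*=x^*+y^*$, $(xy)^*=y^*x^*$. An element $a$ is Moore–Penrose invertible if there is $b$ with $aba=a$, $bab=b$, $(ab)^*=ab$, $(ba)^*=ba$; such $b$ is unique, denoted $a^{\dagger}$, and $R^{\dagger}$ is the set of such $a$. An element $a$ is group invertible if there is $b$ with $aba=a$, $bab=b$, $ab=ba$; such $b$ is unique, denoted $a^{\#}$, and $R^{\#}$ is the set of such $a$. For $a\in R^{\#}\cap R^{\dagger}$, $a$ is SEP if $a^*=a^{\dagger}=a^{\#}$; $R^{SEP}$ denotes the set of SEP elements. For $e,c\in R$, $e$ is a left $c$-idempotent if $e^2=ce$, and a right $c$-idempotent if $e^2=ec$. *)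

theory Defs
  imports Main
begin

definition involution :: "('a::ring_1 \<Rightarrow> 'a) \<Rightarrow> bool" where
  "involution s \<longleftrightarrow> (\<forall>x. s (s x) = x) \<and> (\<forall>x y. s (x + y) = s x + s y)
     \<and> (\<forall>x y. s (x * y) = s y * s x)"

definition is_mp_inverse :: "('a::ring_1 \<Rightarrow> 'a) \<Rightarrow> 'a \<Rightarrow> 'a \<Rightarrow> bool" where
  "is_mp_inverse s a b \<longleftrightarrow> a * b * a = a \<and> b * a * b = b \<and> s (a * b) = a * b \<and> s (b * a) = b * a"

definition mp_invertible :: "('a::ring_1 \<Rightarrow> 'a) \<Rightarrow> 'a \<Rightarrow> bool" where
  "mp_invertible s a \<longleftrightarrow> (\<exists>b. is_mp_inverse s a b)"

definition mp_inv :: "('a::ring_1 \<Rightarrow> 'a) \<Rightarrow> 'a \<Rightarrow> 'a" where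
  "mp_inv s a = (THE b. is_mp_inverse s a b)"

definition is_group_inverse :: "'a::ring_1 \<Rightarrow> 'a \<Rightarrow> bool" where
  "is_group_inverse a b \<longleftrightarrow> a * b * a = a \<and> b * a * b = b \<and> a * b = b * a"

definition group_invertible :: "'a::ring_1 \<Rightarrow> bool" where
  "group_invertible a \<longleftrightarrow> (\<exists>b. is_group_inverse a b)"

definition group_inv :: "'a::ring_1 \<Rightarrow> 'a" where
  "group_inv a = (THE b. is_group_inverse a b)"

definition SEP :: "('a::ring_1 \<Rightarrow> 'a) \<Rightarrow> 'a \<Rightarrow> bool" where
  "SEP s a \<longleftrightarrow> group_invertible a \<and> mp_invertible s a \<and>
     s a = mp_inv s a \<and> mp_inv s a = group_inv a"

definition left_c_idempotent :: "'a::ring_1 \<Rightarrow> 'a \<Rightarrow> bool" where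
  "left_c_idempotent c e \<longleftrightarrow> e * e = c * e"

definition right_c_idempotent :: "'a::ring_1 \<Rightarrow> 'a \<Rightarrow> bool" where
  "right_c_idempotent c e \<longleftrightarrow> e * e = e * c"

end

theory Submission imports Defs begin

locale ctx =
  fixes s :: "'a::ring_1 \<Rightarrow> 'a" and a m g :: 'a
  assumes inv[simp]: "\<And>x. s (s x) = x" and sadd: "\<And>x y. s (x+y) = s x + s y"
    and smul[simp]: "\<And>x y. s (x*y) = s y * s x"
    and m1: "a*m*a = a" and m2: "m*a*m = m" and m3: "s(a*m) = a*m" and m4: "s(m*a) = m*a"
    and g1: "a*g*a = a" and g2: "g*a*g = g" and g3: "a*g = g*a"
begin

lemma m3r: "s m * s a = a * m" using m3 by simp
lemma m4r: "s a * s m = m * a" using m4 by simp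
lemma gga: "g*g*a = g" by (metis g2 g3 mult.assoc)
lemma agg: "a*g*g = g" by (metis g2 g3 mult.assoc)
lemma gaa: "g*a*a = a" by (metis g1 g3 mult.assoc)
lemma aag: "a*a*g = a" by (metis g1 g3 mult.assoc)
lemma sm1: "s a * s m * s a = s a" using arg_cong[OF m1, of s] by (simp add: mult.assoc)
lemma sm2: "s m * s a * s m = s m" using arg_cong[OF m2, of s] by (simp add: mult.assoc)
lemma sg1: "s a * s g * s a = s a" using arg_cong[OF g1, of s] by (simp add: mult.assoc)
lemma sg2: "s g * s a * s g = s g" using arg_cong[OF g2, of s] by (simp add: mult.assoc)
lemma sg3: "s g * s a * s a = s a" using arg_cong[OF aag, of s] by (simp add: mult.assoc)
lemma sg4: "s a * s a * s g = s a" using arg_cong[OF gaa, of s] by (simp add: mult.assoc)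
lemma sg5: "s a * s g * s g = s g" using arg_cong[OF gga, of s] by (simp add: mult.assoc)
lemma sg6: "s g * s g * s a = s g" using arg_cong[OF agg, of s] by (simp add: mult.assoc)
lemma sga: "s g * s a = s a * s g" using arg_cong[OF g3, of s] by simp
lemma D1: "s a * a * m = s a" using sm1 m3r by (simp add: mult.assoc)
lemma D2: "m * a * s a = s a" using sm1 m4r by (simp add: mult.assoc[symmetric])
lemma D3: "m * a * s g = s g"
proof -
  have "m * a * s g = m * a * s a * s g * s g" using sg5 by (simp add: mult.assoc)
  also have "\<dots> = s g" using D2 sg5 by simp
  finally show ?thesis .
qed
lemma D4: "s g * a * m = s g"
proof -
  have "s g * a * m = (s g * s g * s a) * a * m" using sg6 by simp
  also have "\<dots> = s g * s g * (s a * a * m)" by (simp add: mult.assoc)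
  also have "\<dots> = s g" using D1 sg6 by simp
  finally show ?thesis .
qed
lemma Mma: "s m * m * a = s m" using sm2 m4r by (simp add: mult.assoc)

lemma m1X: "a * (m * (a * X)) = a * X" using m1 by (simp add: mult.assoc[symmetric])
lemma m1R: "a * (m * a) = a" using m1 by (simp add: mult.assoc[symmetric])
lemma m2X: "m * (a * (m * X)) = m * X" using m2 by (simp add: mult.assoc[symmetric])
lemma m2R: "m * (a * m) = m" using m2 by (simp add: mult.assoc[symmetric])
lemma m3rX: "s m * (s a * X) = a * (m * X)" using m3r by (simp add: mult.assoc[symmetric])
lemma m3rR: "s m * (s a) = a * m" using m3r by (simp add: mult.assoc[symmetric])
lemma m4rX: "s a * (s m * X) = m * (a * X)" using m4r by (simp add: mult.assoc[symmetric])
lemma m4rR: "s a * (s m) = m * a" using m4r by (simp add: mult.assoc[symmetric])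
lemma g1X: "a * (g * (a * X)) = a * X" using g1 by (simp add: mult.assoc[symmetric])
lemma g1R: "a * (g * a) = a" using g1 by (simp add: mult.assoc[symmetric])
lemma g2X: "g * (a * (g * X)) = g * X" using g2 by (simp add: mult.assoc[symmetric])
lemma g2R: "g * (a * g) = g" using g2 by (simp add: mult.assoc[symmetric])
lemma ggaX: "g * (g * (a * X)) = g * X" using gga by (simp add: mult.assoc[symmetric])
lemma ggaR: "g * (g * a) = g" using gga by (simp add: mult.assoc[symmetric])
lemma aggX: "a * (g * (g * X)) = g * X" using agg by (simp add: mult.assoc[symmetric])
lemma aggR: "a * (g * g) = g" using agg by (simp add: mult.assoc[symmetric])
lemma gaaX: "g * (a * (a * X)) = a * X" using gaa by (simp add: mult.assoc[symmetric])
lemma gaaR: "g * (a * a) = a" using gaa by (simp add: mult.assoc[symmetric])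
lemma aagX: "a * (a * (g * X)) = a * X" using aag by (simp add: mult.assoc[symmetric])
lemma aagR: "a * (a * g) = a" using aag by (simp add: mult.assoc[symmetric])
lemma D1X: "s a * (a * (m * X)) = s a * X" using D1 by (simp add: mult.assoc[symmetric])
lemma D1R: "s a * (a * m) = s a" using D1 by (simp add: mult.assoc[symmetric])
lemma D2X: "m * (a * (s a * X)) = s a * X" using D2 by (simp add: mult.assoc[symmetric])
lemma D2R: "m * (a * (s a)) = s a" using D2 by (simp add: mult.assoc[symmetric])
lemma D3X: "m * (a * (s g * X)) = s g * X" using D3 by (simp add: mult.assoc[symmetric])
lemma D3R: "m * (a * (s g)) = s g" using D3 by (simp add: mult.assoc[symmetric])
lemma D4X: "s g * (a * (m * X)) = s g * X" using D4 by (simp add: mult.assoc[symmetric])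
lemma D4R: "s g * (a * m) = s g" using D4 by (simp add: mult.assoc[symmetric])
lemma sm1X: "s a * (s m * (s a * X)) = s a * X" using sm1 by (simp add: mult.assoc[symmetric])
lemma sm1R: "s a * (s m * (s a)) = s a" using sm1 by (simp add: mult.assoc[symmetric])
lemma sm2X: "s m * (s a * (s m * X)) = s m * X" using sm2 by (simp add: mult.assoc[symmetric])
lemma sm2R: "s m * (s a * (s m)) = s m" using sm2 by (simp add: mult.assoc[symmetric])
lemma sg1X: "s a * (s g * (s a * X)) = s a * X" using sg1 by (simp add: mult.assoc[symmetric])
lemma sg1R: "s a * (s g * (s a)) = s a" using sg1 by (simp add: mult.assoc[symmetric])
lemma sg2X: "s g * (s a * (s g * X)) = s g * X" using sg2 by (simp add: mult.assoc[symmetric])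
lemma sg2R: "s g * (s a * (s g)) = s g" using sg2 by (simp add: mult.assoc[symmetric])
lemma sg3X: "s g * (s a * (s a * X)) = s a * X" using sg3 by (simp add: mult.assoc[symmetric])
lemma sg3R: "s g * (s a * (s a)) = s a" using sg3 by (simp add: mult.assoc[symmetric])
lemma sg4X: "s a * (s a * (s g * X)) = s a * X" using sg4 by (simp add: mult.assoc[symmetric])
lemma sg4R: "s a * (s a * (s g)) = s a" using sg4 by (simp add: mult.assoc[symmetric])
lemma sg5X: "s a * (s g * (s g * X)) = s g * X" using sg5 by (simp add: mult.assoc[symmetric])
lemma sg5R: "s a * (s g * (s g)) = s g" using sg5 by (simp add: mult.assoc[symmetric])
lemma sg6X: "s g * (s g * (s a * X)) = s g * X" using sg6 by (simp add: mult.assoc[symmetric])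
lemma sg6R: "s g * (s g * (s a)) = s g" using sg6 by (simp add: mult.assoc[symmetric])
lemma MmaX: "s m * (m * (a * X)) = s m * X" using Mma by (simp add: mult.assoc[symmetric])
lemma MmaR: "s m * (m * a) = s m" using Mma by (simp add: mult.assoc[symmetric])
lemmas RR = m1X m1R m2X m2R m3rX m3rR m4rX m4rR g1X g1R g2X g2R ggaX ggaR aggX aggR gaaX gaaR aagX aagR D1X D1R D2X D2R D3X D3R D4X D4R sm1X sm1R sm2X sm2R sg1X sg1R sg2X sg2R sg3X sg3R sg4X sg4R sg5X sg5R sg6X sg6R MmaX MmaR


lemma sga_X: "s g * (s a * X) = s a * (s g * X)" by (simp add: sga mult.assoc[symmetric])

lemma K: "a * s a * s g * m = a * m"
proof -
  have "a * s a * s g * m = a * s a * s g * (m * a * m)" by (simp add: m2)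
  also have "\<dots> = a * (s a * s g * s a * s m) * m" by (simp add: m4r mult.assoc)
  also have "\<dots> = a * m" by (simp add: mult.assoc RR)
  finally show ?thesis .
qed

lemma KX: "a * (s a * (s g * (m * X))) = a * (m * X)" using K by (simp add: mult.assoc[symmetric])
lemma KR: "a * (s a * (s g * m)) = a * m" using K by (simp add: mult.assoc[symmetric])
lemma Z1: "(a * s g * m) * (a * s a * s a * s m * m) = a * m"
  by (simp add: mult.assoc RR sga_X KR)
lemma Z2: "(a * s a * s a * s m * m) * (a * s g * m) = a * m"
proof -
  show ?thesis by (simp add: mult.assoc RR KR)
qed
lemma W: "(a * s g * s a) * (a * m * m) = a * m"
  by (simp add: mult.assoc RR sga_X KX KR)

lemma mp_unique: assumes "a * b * a = a" "b * a * b = b" "s (a*b) = a*b" "s (b*a) = b*a"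
  shows "b = m"
proof -
  have ab: "a * b = a * m"
  proof -
    have "a * b = s (a*b)" using assms by simp
    also have "\<dots> = s b * s (a * m * a)" using m1 by simp
    also have "\<dots> = s (a * b) * s (a * m)" by (simp add: mult.assoc)
    also have "\<dots> = a * b * a * m" by (simp only: assms(3) m3 mult.assoc)
    finally show ?thesis using assms by (simp add: mult.assoc[symmetric])
  qed
  have ba: "b * a = m * a"
  proof -
    have "b * a = s (b*a)" using assms by simp
    also have "\<dots> = s (a * m * a) * s b" using m1 by simp
    also have "\<dots> = s (m * a) * s (b * a)" by (simp add: mult.assoc)
    also have "\<dots> = m * (a * b * a)" by (simp only: assms(4) m4 mult.assoc)
    finally show ?thesis using assms by simp
  qed
  have "b = b * a * b" using assms by simp
  also have "\<dots> = m * a * m" using ab ba by (metis mult.assoc)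
  finally show ?thesis using m2 by simp
qed

lemma EP1: assumes h: "a * m * m = m" shows "m = g"
proof -
  have gam: "g * a * m = m"
  proof -
    have "g * a * m = g * a * (a * m * m)" using h by simp
    also have "\<dots> = (g * a * a) * m * m" by (simp add: mult.assoc)
    also have "\<dots> = m" using h gaa by (simp add: mult.assoc)
    finally show ?thesis .
  qed
  have ma: "m * a = g * a"
  proof -
    have "m * a = g * a * m * a" using gam by simp
    also have "\<dots> = g * a" by (simp add: mult.assoc RR)
    finally show ?thesis .
  qed
  have sag: "s (a * g) = a * g" using m4 ma g3 by simp
  have am: "a * m = a * g"
  proof -
    have "a * m = s (a * m)" using m3 by simp
    also have "\<dots> = s (a * g * (a * m))" by (simp add: mult.assoc RR)
    also have "\<dots> = a * m * (a * g)" using m3 sag by simp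
    also have "\<dots> = a * g" by (simp add: mult.assoc RR)
    finally show ?thesis .
  qed
  have "g = g * (a * g)" using g2 by (simp add: mult.assoc)
  also have "\<dots> = g * a * m" using am by (simp add: mult.assoc)
  also have "\<dots> = m * a * m" using ma by simp
  finally show ?thesis using m2 by simp
qed

lemma EP2: assumes h: "a * a * m = a" shows "m = g"
proof -
  have ga: "g * a = a * m"
  proof -
    have "g * a = g * (a * a * m)" using h by simp
    also have "\<dots> = a * m" by (simp add: mult.assoc RR)
    finally show ?thesis .
  qed
  have sga': "s (g * a) = g * a" using m3 ga by simp
  have ma: "m * a = g * a"
  proof -
    have "m * a = s (m * a)" using m4 by simp
    also have "\<dots> = s (m * a * (g * a))" by (simp add: mult.assoc RR)
    also have "\<dots> = g * a * (m * a)" using m4 sga' by simp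
    also have "\<dots> = g * a" by (simp add: mult.assoc RR)
    finally show ?thesis .
  qed
  have "m = m * a * m" using m2 by simp
  also have "\<dots> = g * (a * m)" using ma by (simp add: mult.assoc)
  also have "\<dots> = g * g * a" using ga by (simp add: mult.assoc)
  finally show ?thesis using gga by simp
qed


lemma amX: "a * m * (a * s g * m) = a * s g * m" by (simp add: mult.assoc RR)
lemma Xam: "(a * s g * m) * (a * m) = a * s g * m" by (simp add: mult.assoc RR)

lemma C2ep: assumes h: "(a * s g * m) * (a * s g * m) = (m * a * a) * (a * s g * m)"
  shows "a * m * m = m"
proof -
  let ?X = "a * s g * m" and ?B = "m * a * a" and ?z = "a * s a * s a * s m * m"
  have 1: "a * m * (?B * ?X) = ?B * ?X"
    using h amX by (metis mult.assoc)
  have 2: "a * m * ?B * (a * m) = ?B * (a * m)"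
  proof -
    have "a * m * ?B * (a * m) = (a * m * (?B * ?X)) * ?z" using Z1 by (simp add: mult.assoc)
    also have "\<dots> = ?B * (?X * ?z)" using 1 by (simp add: mult.assoc)
    also have "\<dots> = ?B * (a * m)" using Z1 by simp
    finally show ?thesis .
  qed
  have "a * m * ?B * (a * m) * a = ?B * (a * m) * a" using 2 by simp
  hence 3: "a * m * m * a * a * a = m * a * a * a" by (simp add: mult.assoc RR)
  have "a * m * m * a * a * a * (g * g * m) = m * a * a * a * (g * g * m)" using 3 by simp
  thus ?thesis by (simp add: mult.assoc RR)
qed

lemma C3ep: assumes h: "(a * s g * m) * (a * s g * m) = (a * s g * m) * (m * a * a)"
  shows "a * a * m = a"
proof -
  let ?X = "a * s g * m" and ?B = "m * a * a" and ?z = "a * s a * s a * s m * m"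
  have 1: "?X * ?B * (a * m) = ?X * ?B"
    using h Xam by (metis mult.assoc)
  have 2: "a * m * ?B * (a * m) = a * m * ?B"
  proof -
    have "a * m * ?B * (a * m) = ?z * (?X * ?B * (a * m))" by (simp add: mult.assoc RR KR KX sga_X)
    also have "\<dots> = ?z * (?X * ?B)" using 1 by simp
    also have "\<dots> = a * m * ?B" by (simp add: mult.assoc RR KR KX sga_X)
    finally show ?thesis .
  qed
  have "g * ((a * s g * s a) * (a * m * ?B * (a * m))) = g * ((a * s g * s a) * (a * m * ?B))" using 2 by simp
  thus ?thesis by (simp add: mult.assoc RR KR KX sga_X)
qed

lemma C4ep: assumes h: "(m * a * a) * (m * a * a) = (a * s g * m) * (m * a * a)"
  shows "a * m * m = m"
proof -
  have 1: "a * m * ((m * a * a) * (m * a * a)) = (m * a * a) * (m * a * a)"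
    using h amX by (metis mult.assoc)
  have "a * m * ((m * a * a) * (m * a * a)) * (g * g * m) = (m * a * a) * (m * a * a) * (g * g * m)" using 1 by simp
  thus ?thesis by (simp add: mult.assoc RR)
qed

lemma C5ep: assumes h: "(m * a * a) * (m * a * a) = (m * a * a) * (a * s g * m)"
  shows "a * a * m = a"
proof -
  have 1: "(m * a * a) * (m * a * a) * (a * m) = (m * a * a) * (m * a * a)"
    using h Xam by (metis mult.assoc)
  have "g * g * (a * ((m * a * a) * (m * a * a) * (a * m))) = g * g * (a * ((m * a * a) * (m * a * a)))" using 1 by simp
  thus ?thesis by (simp add: mult.assoc RR)
qed

lemma SEPfwd: assumes "s a = m" "m = g" shows "a * s g * m = a" "m * a * a = a"
proof -
  have "s g = a" using assms by (metis inv)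
  thus "a * s g * m = a" using assms aag by simp
  show "m * a * a = a" using assms gaa by simp
qed

end

locale ctxEP = ctx + assumes ep: "m = g"
begin
lemma sag: "s (a * g) = a * g" using m3 ep by simp
lemma sga2: "s (g * a) = g * a" using m4 ep by simp
lemma GA: "s g * s a = a * g" using sag by simp
lemma AG: "s a * s g = g * a" using sga2 by simp
lemma L1: "s g * g * a = s g"
proof -
  have "s g * g * a = s g * (s a * s g)" using AG by (simp add: mult.assoc)
  thus ?thesis using sg2 by (simp add: mult.assoc)
qed
lemma L2: "g * a * s g = s g"
proof -
  have "g * a * s g = s a * s g * s g" using AG by simp
  thus ?thesis using sg5 by simp
qed
lemma L1X: "s g * (g * (a * X)) = s g * X" using L1 by (simp add: mult.assoc[symmetric])
lemma L1R: "s g * (g * a) = s g" using L1 by (simp add: mult.assoc[symmetric])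
lemma L2X: "g * (a * (s g * X)) = s g * X" using L2 by (simp add: mult.assoc[symmetric])
lemma L2R: "g * (a * s g) = s g" using L2 by (simp add: mult.assoc[symmetric])
lemmas EE = L1X L1R L2X L2R

lemma fin1: assumes "s g = a" shows "s a = m \<and> m = g"
  using assms ep by (metis inv)

lemma fin2: assumes "a * s a * a = a" shows "s a = m \<and> m = g"
proof -
  have "s a = m"
  proof (rule mp_unique)
    show "a * s a * a = a" by fact
    have "s (a * s a * a) = s a" using assms by simp
    thus "s a * a * s a = s a" by (simp add: mult.assoc)
    show "s (a * s a) = a * s a" by simp
    show "s (s a * a) = s a * a" by simp
  qed
  thus ?thesis using ep by simp
qed

lemma E2: assumes h: "(a * s g * m) * (a * s g * m) = (m * a * a) * (a * s g * m)"
  shows "s a = m \<and> m = g"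
proof -
  have h': "(a * s g * g) * (a * s g * g) = (g * a * a) * (a * s g * g)" using h by (simp only: ep)
  have s1: "a * s g * s g * g = a * a * s g * g" using h' by (simp add: mult.assoc RR EE)
  have "a * s g * s g * g * a = a * a * s g * g * a" using s1 by simp
  hence s2: "a * s g * s g = a * a * s g" by (simp add: mult.assoc RR EE)
  have "g * (a * s g * s g) = g * (a * a * s g)" using s2 by simp
  hence s3: "s g * s g = a * s g" by (simp add: mult.assoc RR EE)
  have "s g * s g * s a = a * s g * s a" using s3 by simp
  moreover have "s g * s g * s a = s g" by (rule sg6)
  moreover have "a * s g * s a = a" using GA aag by (simp add: mult.assoc)
  ultimately show ?thesis using fin1 by simp
qed

lemma E3: assumes h: "(a * s g * m) * (a * s g * m) = (a * s g * m) * (m * a * a)"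
  shows "s a = m \<and> m = g"
proof -
  have h': "(a * s g * g) * (a * s g * g) = (a * s g * g) * (g * a * a)" using h by (simp only: ep)
  have s1: "a * s g * s g * g = a * s g" using h' by (simp add: mult.assoc RR EE)
  have "a * s g * s g * g * a = a * s g * a" using s1 by simp
  hence s2: "a * s g * s g = a * s g * a" by (simp add: mult.assoc RR EE)
  have "g * (a * s g * s g) = g * (a * s g * a)" using s2 by simp
  hence s3: "s g * s g = s g * a" by (simp add: mult.assoc RR EE)
  have "s g * s g * s a = s g * a * s a" using s3 by simp
  hence s4: "s g = s g * a * s a" using sg6 by simp
  have "s a * s g = s a * (s g * a * s a)" using s4 by simp
  hence s5: "g * a = a * s a" using AG by (simp add: mult.assoc[symmetric] gaa)
  have "a * s a * a = g * a * a" using s5 by simp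
  thus ?thesis using gaa fin2 by simp
qed

lemma E4: assumes h: "(m * a * a) * (m * a * a) = (a * s g * m) * (m * a * a)"
  shows "s a = m \<and> m = g"
proof -
  have h': "(g * a * a) * (g * a * a) = (a * s g * g) * (g * a * a)" using h by (simp only: ep)
  have s1: "a * a = a * s g" using h' by (simp add: mult.assoc RR EE)
  have "g * (a * a) = g * (a * s g)" using s1 by simp
  hence "a = s g" by (simp add: mult.assoc RR EE)
  thus ?thesis by (rule fin1[OF sym])
qed

lemma E5: assumes h: "(m * a * a) * (m * a * a) = (m * a * a) * (a * s g * m)"
  shows "s a = m \<and> m = g"
proof -
  have h': "(g * a * a) * (g * a * a) = (g * a * a) * (a * s g * g)" using h by (simp only: ep)
  have e1: "(g * a * a) * (g * a * a) = a * a" by (simp add: mult.assoc RR)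
  have e2: "(g * a * a) * (a * s g * g) = a * a * s g * g" by (simp add: mult.assoc RR)
  have s1: "a * a = a * a * s g * g" using h' unfolding e1 e2 .
  have "g * (a * a) = g * (a * a * s g * g)" using s1 by simp
  hence s2: "a = a * s g * g" by (simp add: mult.assoc RR EE)
  have "a * a = a * s g * g * a" using arg_cong[OF s2, of "\<lambda>t. t * a"] by (simp only:)
  hence s3: "a * a = a * s g" by (simp add: mult.assoc RR EE)
  have "g * (a * a) = g * (a * s g)" using s3 by simp
  hence "a = s g" by (simp add: mult.assoc RR EE)
  thus ?thesis by (rule fin1[OF sym])
qed

end

context ctx begin

lemma final:
  "(s a = m \<and> m = g) \<longleftrightarrow> (a * s g * m) * (a * s g * m) = (m * a * a) * (a * s g * m)"
  "(s a = m \<and> m = g) \<longleftrightarrow> (a * s g * m) * (a * s g * m) = (a * s g * m) * (m * a * a)"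
  "(s a = m \<and> m = g) \<longleftrightarrow> (m * a * a) * (m * a * a) = (a * s g * m) * (m * a * a)"
  "(s a = m \<and> m = g) \<longleftrightarrow> (m * a * a) * (m * a * a) = (m * a * a) * (a * s g * m)"
proof -
  have fw: "a * s g * m = a \<and> m * a * a = a" if "s a = m \<and> m = g"
    using SEPfwd that by blast
  show "(s a = m \<and> m = g) \<longleftrightarrow> (a * s g * m) * (a * s g * m) = (m * a * a) * (a * s g * m)"
  proof
    assume h: "(a * s g * m) * (a * s g * m) = (m * a * a) * (a * s g * m)"
    have "m = g" using EP1 C2ep h by blast
    then interpret E: ctxEP s a m g by unfold_locales
    show "s a = m \<and> m = g" using E.E2 h by blast
  qed (use fw in simp)
  show "(s a = m \<and> m = g) \<longleftrightarrow> (a * s g * m) * (a * s g * m) = (a * s g * m) * (m * a * a)"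
  proof
    assume h: "(a * s g * m) * (a * s g * m) = (a * s g * m) * (m * a * a)"
    have "m = g" using EP2 C3ep h by blast
    then interpret E: ctxEP s a m g by unfold_locales
    show "s a = m \<and> m = g" using E.E3 h by blast
  qed (use fw in simp)
  show "(s a = m \<and> m = g) \<longleftrightarrow> (m * a * a) * (m * a * a) = (a * s g * m) * (m * a * a)"
  proof
    assume h: "(m * a * a) * (m * a * a) = (a * s g * m) * (m * a * a)"
    have "m = g" using EP1 C4ep h by blast
    then interpret E: ctxEP s a m g by unfold_locales
    show "s a = m \<and> m = g" using E.E4 h by blast
  qed (use fw in simp)
  show "(s a = m \<and> m = g) \<longleftrightarrow> (m * a * a) * (m * a * a) = (m * a * a) * (a * s g * m)"
  proof
    assume h: "(m * a * a) * (m * a * a) = (m * a * a) * (a * s g * m)"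
    have "m = g" using EP2 C5ep h by blast
    then interpret E: ctxEP s a m g by unfold_locales
    show "s a = m \<and> m = g" using E.E5 h by blast
  qed (use fw in simp)
qed

end

lemma mp_uniq:
  fixes s :: "'a::ring_1 \<Rightarrow> 'a"
  assumes inv: "involution s" and b: "is_mp_inverse s a b" and c: "is_mp_inverse s a c"
  shows "c = b"
proof -
  have sm: "\<And>x y. s (x*y) = s y * s x" using inv unfolding involution_def by blast
  have ss: "\<And>x. s (s x) = x" using inv unfolding involution_def by blast
  have B: "a*b*a = a" "b*a*b = b" "s(a*b) = a*b" "s(b*a) = b*a" using b unfolding is_mp_inverse_def by auto
  have C: "a*c*a = a" "c*a*c = c" "s(a*c) = a*c" "s(c*a) = c*a" using c unfolding is_mp_inverse_def by auto
  have ab: "a * c = a * b"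
  proof -
    have "a * c = s (a*c)" using C by simp
    also have "\<dots> = s c * s (a * b * a)" using B sm by simp
    also have "\<dots> = s (a * c) * s (a * b)" by (simp add: sm mult.assoc)
    also have "\<dots> = a * c * a * b" by (simp only: C(3) B(3) mult.assoc)
    finally show ?thesis using C by (simp add: mult.assoc[symmetric])
  qed
  have ba: "c * a = b * a"
  proof -
    have "c * a = s (c*a)" using C by simp
    also have "\<dots> = s (a * b * a) * s c" using B sm by simp
    also have "\<dots> = s (b * a) * s (c * a)" by (simp add: sm mult.assoc)
    also have "\<dots> = b * (a * c * a)" by (simp only: C(4) B(4) mult.assoc)
    finally show ?thesis using C by simp
  qed
  have "c = c * a * c" using C by simp
  also have "\<dots> = b * a * c" using ba by simp
  also have "\<dots> = b * (a * c)" by (simp only: mult.assoc)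
  also have "\<dots> = b * (a * b)" using ab by simp
  also have "\<dots> = b" using B by (simp add: mult.assoc[symmetric])
  finally show ?thesis .
qed

lemma mp_inv_spec:
  assumes "involution s" "mp_invertible s a"
  shows "is_mp_inverse s a (mp_inv s a)"
proof -
  obtain b where b: "is_mp_inverse s a b" using assms unfolding mp_invertible_def by blast
  have "mp_inv s a = b" unfolding mp_inv_def
    apply (rule the_equality[where P="is_mp_inverse s a"])
     apply (rule b)
    apply (erule mp_uniq[OF assms(1) b])
    done
  thus ?thesis using b by simp
qed

lemma g_uniq:
  fixes a :: "'a::ring_1"
  assumes b: "is_group_inverse a b" and c: "is_group_inverse a c"
  shows "c = b"
proof -
  have B: "a*b*a = a" "b*a*b = b" "a*b = b*a" using b unfolding is_group_inverse_def by auto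
  have C: "a*c*a = a" "c*a*c = c" "a*c = c*a" using c unfolding is_group_inverse_def by auto
  have b1: "b = b * b * a"
  proof -
    have "b = b * (a * b)" using B(2) by (simp add: mult.assoc)
    also have "\<dots> = b * b * a" using B(3) by (simp add: mult.assoc)
    finally show ?thesis .
  qed
  have c1: "c = a * c * c"
  proof -
    have "c = (c * a) * c" using C(2) by simp
    also have "\<dots> = a * c * c" using C(3) by simp
    finally show ?thesis .
  qed
  note b1
  also have "b * b * a = b * b * (a * c * a)" using C(1) by simp
  also have "\<dots> = (b * b * a) * (c * a)" by (simp only: mult.assoc)
  also have "\<dots> = b * (c * a)" using b1[symmetric] by simp
  also have "\<dots> = b * (a * c)" using C(3) by simp
  finally have 1: "b = b * a * c" by (simp only: mult.assoc)
  note c1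
  also have "a * c * c = (a * b * a) * c * c" using B(1) by simp
  also have "\<dots> = a * b * (a * c * c)" by (simp only: mult.assoc)
  also have "\<dots> = a * b * c" using c1[symmetric] by simp
  also have "\<dots> = b * a * c" using B(3) by simp
  finally show ?thesis using 1 by (rule trans[OF _ sym])
qed

lemma g_inv_spec:
  assumes "group_invertible a"
  shows "is_group_inverse a (group_inv a)"
proof -
  obtain b where b: "is_group_inverse a b" using assms unfolding group_invertible_def by blast
  have "group_inv a = b" unfolding group_inv_def
    apply (rule the_equality[where P="is_group_inverse a"])
     apply (rule b)
    apply (erule g_uniq[OF b])
    done
  thus ?thesis using b by simp
qed

lemma sub_iff: fixes x b :: "'a::ring_1"
  shows "right_c_idempotent (- b) (x - b) \<longleftrightarrow> x * x = b * x"
    "left_c_idempotent (- b) (x - b) \<longleftrightarrow> x * x = x * b"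
    "right_c_idempotent (- x) (b - x) \<longleftrightarrow> b * b = x * b"
    "left_c_idempotent (- x) (b - x) \<longleftrightarrow> b * b = b * x"
proof -
  have 1: "(x - b) * (x - b) - (x - b) * (- b) = x * x - b * x" by (simp add: algebra_simps)
  have 2: "(x - b) * (x - b) - (- b) * (x - b) = x * x - x * b" by (simp add: algebra_simps)
  have 3: "(b - x) * (b - x) - (b - x) * (- x) = b * b - x * b" by (simp add: algebra_simps)
  have 4: "(b - x) * (b - x) - (- x) * (b - x) = b * b - b * x" by (simp add: algebra_simps)
  show "right_c_idempotent (- b) (x - b) \<longleftrightarrow> x * x = b * x"
    unfolding right_c_idempotent_def using 1 by (metis eq_iff_diff_eq_0)
  show "left_c_idempotent (- b) (x - b) \<longleftrightarrow> x * x = x * b"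
    unfolding left_c_idempotent_def using 2 by (metis eq_iff_diff_eq_0)
  show "right_c_idempotent (- x) (b - x) \<longleftrightarrow> b * b = x * b"
    unfolding right_c_idempotent_def using 3 by (metis eq_iff_diff_eq_0)
  show "left_c_idempotent (- x) (b - x) \<longleftrightarrow> b * b = b * x"
    unfolding left_c_idempotent_def using 4 by (metis eq_iff_diff_eq_0)
qed

theorem theorem3p4:
  fixes s :: "'a::ring_1 \<Rightarrow> 'a" and a :: 'a
  assumes "involution s"
    and "group_invertible a" and "mp_invertible s a"
  defines "x \<equiv> a * s (group_inv a) * mp_inv s a"
    and "b \<equiv> mp_inv s a * a ^ 2"
  shows "(SEP s a \<longleftrightarrow> right_c_idempotent (- b) (x - b))
       \<and> (SEP s a \<longleftrightarrow> left_c_idempotent (- b) (x - b))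
       \<and> (SEP s a \<longleftrightarrow> right_c_idempotent (- x) (b - x))
       \<and> (SEP s a \<longleftrightarrow> left_c_idempotent (- x) (b - x))"
proof -
  define m where "m = mp_inv s a"
  define g where "g = group_inv a"
  have M: "is_mp_inverse s a m" using mp_inv_spec assms(1,3) m_def by blast
  have G: "is_group_inverse a g" using g_inv_spec assms(2) g_def by blast
  have I: "\<forall>x. s (s x) = x" "\<forall>x y. s (x+y) = s x + s y" "\<forall>x y. s (x*y) = s y * s x"
    using assms(1) unfolding involution_def by blast+
  have Mm: "a*m*a = a" "m*a*m = m" "s(a*m) = a*m" "s(m*a) = m*a"
    using M unfolding is_mp_inverse_def by blast+
  have Gg: "a*g*a = a" "g*a*g = g" "a*g = g*a"
    using G unfolding is_group_inverse_def by blast+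
  interpret C: ctx s a m g
    by unfold_locales (use I Mm Gg in blast)+
  have sep: "SEP s a \<longleftrightarrow> (s a = m \<and> m = g)"
    unfolding SEP_def m_def[symmetric] g_def[symmetric] using assms(2,3) by blast
  have xe: "x = a * s g * m" unfolding x_def m_def g_def ..
  have be: "b = m * a * a" unfolding b_def m_def by (simp add: power2_eq_square mult.assoc)
  show ?thesis unfolding sep sub_iff xe be by (intro conjI C.final)
qed

end
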